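(* Let $R$ be a commutative ring of Krull dimension $0$ which is integral over an Artinian subring $R_0$, and write $\mathcal{F}=\mathcal{F}(R_0,R)=\{R_\alpha\}$. Then for every $\alpha$, the ring $\mathcal{F}\llbracket X_1,\ldots,X_n\rrbracket$ is integral over its subring $R_\alpha\llbracket X_1,\ldots,X_n\rrbracket$.
   Context: All rings are commutative with identity, and subrings share the identity. For a $0$-dimensional ring $R$ and an Artinian subring $R_0\subseteq R$ such that $R$ is integral over $R_0$, let $\mathcal{F}(R_0,R)=\{R_\alpha\}$ denote the family of all subrings of $R$ that are finitely generated as $R_0$-algebras; this family is directed, each $R_\alpha$ is Artinian, and $R=\bigcup_\alpha R_\alpha$. The ring of Artinian power series $\mathcal{F}\llbracket X_1,\ldots,X_n\rrbracket$ is the set of all $f\in R\llbracket X_1,\ldots,X_n\rrbracket$ such that all coefficients of $f$ lie in a single $R_\alpha\in\mathcal{F}$; equivalently, $\mathcal{F}\llbracket X_1,\ldots,X_n\rrbracket=\bigcup_\alpha R_\alpha\llbracket X_1,\ldots,X_n\rrbracket$, which is a subring of $R\llbracket X_1,\ldots,X_n\rrbracket$. *)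

theory Defs
  imports "HOL-Algebra.Algebra"
begin

text \<open>Krull dimension 0: there is a prime ideal (so the ring is nonzero)
  and every prime ideal is maximal.\<close>
definition krull_dim_zero :: "('a, 'b) ring_scheme \<Rightarrow> bool" where
  "krull_dim_zero R \<longleftrightarrow>
     (\<exists>P. primeideal P R) \<and> (\<forall>P. primeideal P R \<longrightarrow> maximalideal P R)"

definition artinian_ring :: "('a, 'b) ring_scheme \<Rightarrow> bool" where
  "artinian_ring A \<longleftrightarrow> ring A \<and>
     (\<forall>I :: nat \<Rightarrow> 'a set. (\<forall>k. ideal (I k) A \<and> I (Suc k) \<subseteq> I k) \<longrightarrow>
        (\<exists>N. \<forall>k\<ge>N. I k = I N))"

definition integral_over :: "('a, 'b) ring_scheme \<Rightarrow> 'a set \<Rightarrow> 'a \<Rightarrow> bool" where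
  "integral_over R S x \<longleftrightarrow>
     (\<exists>k::nat. \<exists>c :: nat \<Rightarrow> 'a. k \<ge> 1 \<and> (\<forall>i<k. c i \<in> S) \<and>
        x [^]\<^bsub>R\<^esub> k \<oplus>\<^bsub>R\<^esub> (\<Oplus>\<^bsub>R\<^esub>i\<in>{..<k}. c i \<otimes>\<^bsub>R\<^esub> x [^]\<^bsub>R\<^esub> i) = \<zero>\<^bsub>R\<^esub>)"

definition fg_family :: "('a, 'b) ring_scheme \<Rightarrow> 'a set \<Rightarrow> 'a set set" where
  "fg_family R R0 = {generate_ring R (R0 \<union> A) | A. finite A \<and> A \<subseteq> carrier R}"

text \<open>A power series is a function from exponent vectors ('n \<Rightarrow> nat) to
  coefficients.  The variables X_1,...,X_n are indexed by the finite type 'n.\<close>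

definition ps_carrier :: "'a set \<Rightarrow> (('n::finite \<Rightarrow> nat) \<Rightarrow> 'a) set" where
  "ps_carrier S = {f. \<forall>m. f m \<in> S}"

definition ps_ring :: "('a, 'b) ring_scheme \<Rightarrow> (('n::finite \<Rightarrow> nat) \<Rightarrow> 'a) ring" where
  "ps_ring R =
    \<lparr> carrier = ps_carrier (carrier R),
      monoid.mult = (\<lambda>f g m. \<Oplus>\<^bsub>R\<^esub>p\<in>{(a, b). \<forall>i. a i + b i = m i}. f (fst p) \<otimes>\<^bsub>R\<^esub> g (snd p)),
      one = (\<lambda>m. if m = (\<lambda>i. 0) then \<one>\<^bsub>R\<^esub> else \<zero>\<^bsub>R\<^esub>),
      ring.zero = (\<lambda>m. \<zero>\<^bsub>R\<^esub>),
      add = (\<lambda>f g m. f m \<oplus>\<^bsub>R\<^esub> g m) \<rparr>"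

text \<open>The ring of Artinian power series F[[X]] = union of R_alpha[[X]].\<close>
definition artinian_ps :: "('a, 'b) ring_scheme \<Rightarrow> 'a set \<Rightarrow> (('n::finite \<Rightarrow> nat) \<Rightarrow> 'a) set" where
  "artinian_ps R R0 = (\<Union>S\<in>fg_family R R0. ps_carrier S)"

end

theory Submission
  imports Defs
begin


definition antidiag :: "('n::finite \<Rightarrow> nat) \<Rightarrow> (('n \<Rightarrow> nat) \<times> ('n \<Rightarrow> nat)) set" where
  "antidiag m = {(a, b). \<forall>i. a i + b i = m i}"

lemma finite_antidiag: "finite (antidiag m)"
proof -
  have "antidiag m \<subseteq> {a. \<forall>i. a i \<le> m i} \<times> {b. \<forall>i. b i \<le> m i}"
    by (auto simp: antidiag_def) (metis le_add1, metis le_add2)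
  moreover have "finite {a::'a\<Rightarrow>nat. \<forall>i. a i \<le> m i}"
  proof -
    have "{a::'a\<Rightarrow>nat. \<forall>i. a i \<le> m i} \<subseteq> Pi\<^sub>E UNIV (\<lambda>i. {..m i})" by auto
    thus ?thesis using finite_PiE[of UNIV "\<lambda>i. {..m i}"] by (auto intro: finite_subset)
  qed
  ultimately show ?thesis by (auto intro: finite_subset)
qed

lemma (in ring) finsum_Sigma:
  assumes "finite A" "\<And>x. x \<in> A \<Longrightarrow> finite (B x)"
    "\<And>x y. x \<in> A \<Longrightarrow> y \<in> B x \<Longrightarrow> F x y \<in> carrier R"
  shows "(\<Oplus>x\<in>A. \<Oplus>y\<in>B x. F x y) = (\<Oplus>p\<in>Sigma A B. F (fst p) (snd p))"
  using assms
proof (induction A rule: finite_induct)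
  case empty then show ?case by simp
next
  case (insert a A)
  have eq: "Sigma (insert a A) B = Pair a ` B a \<union> Sigma A B" by auto
  have "(\<Oplus>p\<in>Sigma (insert a A) B. F (fst p) (snd p)) =
        (\<Oplus>p\<in>Pair a ` B a. F (fst p) (snd p)) \<oplus> (\<Oplus>p\<in>Sigma A B. F (fst p) (snd p))"
    unfolding eq by (rule finsum_Un_disjoint) (use insert in auto)
  also have "(\<Oplus>p\<in>Pair a ` B a. F (fst p) (snd p)) = (\<Oplus>y\<in>B a. F a y)"
    by (subst finsum_reindex) (use insert in \<open>auto simp: inj_on_def\<close>)
  finally show ?case using insert by (simp add: Pi_def)
qed

lemma ps_simps:
  "carrier (ps_ring R) = ps_carrier (carrier R)"
  "f \<otimes>\<^bsub>ps_ring R\<^esub> g = (\<lambda>m. \<Oplus>\<^bsub>R\<^esub>p\<in>antidiag m. f (fst p) \<otimes>\<^bsub>R\<^esub> g (snd p))"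
  "\<one>\<^bsub>ps_ring R\<^esub> = (\<lambda>m. if m = (\<lambda>i. 0) then \<one>\<^bsub>R\<^esub> else \<zero>\<^bsub>R\<^esub>)"
  "\<zero>\<^bsub>ps_ring R\<^esub> = (\<lambda>m. \<zero>\<^bsub>R\<^esub>)"
  "f \<oplus>\<^bsub>ps_ring R\<^esub> g = (\<lambda>m. f m \<oplus>\<^bsub>R\<^esub> g m)"
  by (simp_all add: ps_ring_def antidiag_def)

lemma ps_carrier_iff: "f \<in> ps_carrier S \<longleftrightarrow> (\<forall>m. f m \<in> S)"
  by (simp add: ps_carrier_def)

context cring
begin

lemma ps_mult_closed:
  "f \<in> ps_carrier (carrier R) \<Longrightarrow> g \<in> ps_carrier (carrier R) \<Longrightarrow>
   (\<lambda>m. \<Oplus>p\<in>antidiag m. f (fst p) \<otimes> g (snd p)) \<in> ps_carrier (carrier R)"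
  by (auto simp: ps_carrier_iff intro!: finsum_closed)

lemma ps_one_mult:
  fixes m :: "'n::finite \<Rightarrow> nat"
  assumes "f \<in> ps_carrier (carrier R)"
  shows "(\<Oplus>p\<in>antidiag m. (if fst p = (\<lambda>i. 0) then \<one> else \<zero>) \<otimes> f (snd p)) = f m"
proof -
  have "(\<Oplus>p\<in>antidiag m. (if fst p = (\<lambda>i. 0) then \<one> else \<zero>) \<otimes> f (snd p))
      = (\<Oplus>p\<in>antidiag m. (if ((\<lambda>i. 0), m) = p then f (snd p) else \<zero>))"
    by (rule finsum_cong') (use assms in \<open>auto simp: ps_carrier_iff antidiag_def\<close>)
  also have "\<dots> = f (snd ((\<lambda>i. 0), m))"
    using finsum_singleton[where i="((\<lambda>i. 0::nat), m)" and f="\<lambda>p. f (snd p)" and A="antidiag m"]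
      assms finite_antidiag by (auto simp: ps_carrier_iff antidiag_def)
  finally show ?thesis by simp
qed

lemma ps_comm:
  fixes m :: "'n::finite \<Rightarrow> nat"
  assumes "f \<in> ps_carrier (carrier R)" "g \<in> ps_carrier (carrier R)"
  shows "(\<Oplus>p\<in>antidiag m. f (fst p) \<otimes> g (snd p)) = (\<Oplus>p\<in>antidiag m. g (fst p) \<otimes> f (snd p))"
proof -
  have sw: "antidiag m = prod.swap ` antidiag m"
    by (auto simp: antidiag_def image_iff add.commute)
  have "(\<Oplus>p\<in>antidiag m. g (fst p) \<otimes> f (snd p)) = (\<Oplus>p\<in>prod.swap ` antidiag m. g (fst p) \<otimes> f (snd p))"
    using sw by simp
  also have "\<dots> = (\<Oplus>p\<in>antidiag m. g (snd p) \<otimes> f (fst p))"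
    by (subst finsum_reindex) (use assms in \<open>auto simp: ps_carrier_iff\<close>)
  also have "\<dots> = (\<Oplus>p\<in>antidiag m. f (fst p) \<otimes> g (snd p))"
    by (rule finsum_cong') (use assms in \<open>auto simp: ps_carrier_iff m_comm\<close>)
  finally show ?thesis by simp
qed

lemma ps_distr:
  fixes m :: "'n::finite \<Rightarrow> nat"
  assumes "f \<in> ps_carrier (carrier R)" "g \<in> ps_carrier (carrier R)" "h \<in> ps_carrier (carrier R)"
  shows "(\<Oplus>p\<in>antidiag m. (f (fst p) \<oplus> g (fst p)) \<otimes> h (snd p)) =
    (\<Oplus>p\<in>antidiag m. f (fst p) \<otimes> h (snd p)) \<oplus> (\<Oplus>p\<in>antidiag m. g (fst p) \<otimes> h (snd p))"
proof -
  have "(\<Oplus>p\<in>antidiag m. (f (fst p) \<oplus> g (fst p)) \<otimes> h (snd p)) =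
        (\<Oplus>p\<in>antidiag m. f (fst p) \<otimes> h (snd p) \<oplus> g (fst p) \<otimes> h (snd p))"
    by (rule finsum_cong') (use assms in \<open>auto simp: ps_carrier_iff l_distr\<close>)
  also have "\<dots> = (\<Oplus>p\<in>antidiag m. f (fst p) \<otimes> h (snd p)) \<oplus> (\<Oplus>p\<in>antidiag m. g (fst p) \<otimes> h (snd p))"
    by (rule finsum_addf) (use assms in \<open>auto simp: ps_carrier_iff\<close>)
  finally show ?thesis .
qed

definition triples :: "('n::finite \<Rightarrow> nat) \<Rightarrow> (('n \<Rightarrow> nat) \<times> ('n \<Rightarrow> nat) \<times> ('n \<Rightarrow> nat)) set" where
  "triples m = {(a, b, c). \<forall>i. a i + b i + c i = m i}"

lemma ps_assoc:
  fixes m :: "'n::finite \<Rightarrow> nat"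
  assumes "f \<in> ps_carrier (carrier R)" "g \<in> ps_carrier (carrier R)" "h \<in> ps_carrier (carrier R)"
  shows "(\<Oplus>p\<in>antidiag m. (\<Oplus>q\<in>antidiag (fst p). f (fst q) \<otimes> g (snd q)) \<otimes> h (snd p)) =
    (\<Oplus>p\<in>antidiag m. f (fst p) \<otimes> (\<Oplus>q\<in>antidiag (snd p). g (fst q) \<otimes> h (snd q)))"
proof -
  have C: "\<And>x. f x \<in> carrier R" "\<And>x. g x \<in> carrier R" "\<And>x. h x \<in> carrier R"
    using assms by (auto simp: ps_carrier_iff)
  define \<Phi> where "\<Phi> t = f (fst t) \<otimes> g (fst (snd t)) \<otimes> h (snd (snd t))" for t
  have PhiC: "\<Phi> t \<in> carrier R" for t using C by (simp add: \<Phi>_def)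
  define S1 where "S1 = Sigma (antidiag m) (\<lambda>p. antidiag (fst p))"
  define S2 where "S2 = Sigma (antidiag m) (\<lambda>p. antidiag (snd p))"
  define h1 where "h1 x = (fst (snd x), snd (snd x), snd (fst x))" for x :: "(('n \<Rightarrow> nat) \<times> ('n \<Rightarrow> nat)) \<times> ('n \<Rightarrow> nat) \<times> ('n \<Rightarrow> nat)"
  define h2 where "h2 x = (fst (fst x), fst (snd x), snd (snd x))" for x :: "(('n \<Rightarrow> nat) \<times> ('n \<Rightarrow> nat)) \<times> ('n \<Rightarrow> nat) \<times> ('n \<Rightarrow> nat)"
  have i1: "inj_on h1 S1"
  proof (rule inj_onI)
    fix x y assume "x \<in> S1" "y \<in> S1" "h1 x = h1 y"
    then show "x = y"
      by (cases x; cases y) (auto simp: S1_def h1_def antidiag_def fun_eq_iff)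
  qed
  have i2: "inj_on h2 S2"
  proof (rule inj_onI)
    fix x y assume "x \<in> S2" "y \<in> S2" "h2 x = h2 y"
    then show "x = y"
      by (cases x; cases y) (auto simp: S2_def h2_def antidiag_def fun_eq_iff)
  qed
  have im1: "h1 ` S1 = triples m"
  proof
    show "h1 ` S1 \<subseteq> triples m" by (auto simp: S1_def h1_def antidiag_def triples_def)
    show "triples m \<subseteq> h1 ` S1"
    proof
      fix t assume "t \<in> triples m"
      then obtain a b c where t: "t = (a, b, c)" "\<forall>i. a i + b i + c i = m i"
        by (auto simp: triples_def)
      show "t \<in> h1 ` S1"
        by (rule image_eqI[where x = "(((\<lambda>i. a i + b i), c), (a, b))"])
           (use t in \<open>auto simp: h1_def S1_def antidiag_def\<close>)
    qed
  qed
  have im2: "h2 ` S2 = triples m"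
  proof
    show "h2 ` S2 \<subseteq> triples m" by (auto simp: S2_def h2_def antidiag_def triples_def add.assoc)
    show "triples m \<subseteq> h2 ` S2"
    proof
      fix t assume "t \<in> triples m"
      then obtain a b c where t: "t = (a, b, c)" "\<forall>i. a i + b i + c i = m i"
        by (auto simp: triples_def)
      show "t \<in> h2 ` S2"
        by (rule image_eqI[where x = "((a, (\<lambda>i. b i + c i)), (b, c))"])
           (use t in \<open>auto simp: h2_def S2_def antidiag_def add.assoc\<close>)
    qed
  qed
  have "(\<Oplus>p\<in>antidiag m. (\<Oplus>q\<in>antidiag (fst p). f (fst q) \<otimes> g (snd q)) \<otimes> h (snd p))
      = (\<Oplus>p\<in>antidiag m. (\<Oplus>q\<in>antidiag (fst p). f (fst q) \<otimes> g (snd q) \<otimes> h (snd p)))"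
    by (rule finsum_cong') (use C in \<open>auto simp: finsum_ldistr finite_antidiag\<close>)
  also have "\<dots> = (\<Oplus>x\<in>S1. \<Phi> (h1 x))"
    unfolding S1_def
    by (subst finsum_Sigma) (use C in \<open>auto simp: finite_antidiag \<Phi>_def h1_def\<close>)
  also have "\<dots> = (\<Oplus>t\<in>triples m. \<Phi> t)"
    using finsum_reindex[of \<Phi> h1 S1] i1 im1 PhiC by auto
  also have "\<dots> = (\<Oplus>x\<in>S2. \<Phi> (h2 x))"
    using finsum_reindex[of \<Phi> h2 S2] i2 im2 PhiC by auto
  also have "\<dots> = (\<Oplus>p\<in>antidiag m. (\<Oplus>q\<in>antidiag (snd p). f (fst p) \<otimes> (g (fst q) \<otimes> h (snd q))))"
    unfolding S2_def
    by (subst finsum_Sigma) (use C in \<open>auto simp: finite_antidiag \<Phi>_def h2_def m_assoc\<close>)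
  also have "\<dots> = (\<Oplus>p\<in>antidiag m. f (fst p) \<otimes> (\<Oplus>q\<in>antidiag (snd p). g (fst q) \<otimes> h (snd q)))"
    by (rule finsum_cong') (use C in \<open>auto simp: finsum_rdistr finite_antidiag\<close>)
  finally show ?thesis .
qed

lemma ps_cring: "cring (ps_ring R :: (('n::finite \<Rightarrow> nat) \<Rightarrow> 'a) ring)"
proof (rule cringI)
  show "abelian_group (ps_ring R :: (('n::finite \<Rightarrow> nat) \<Rightarrow> 'a) ring)"
  proof (rule abelian_groupI, goal_cases)
    case 1 then show ?case by (auto simp: ps_simps ps_carrier_iff)
  next
    case 2 then show ?case by (auto simp: ps_simps ps_carrier_iff)
  next
    case 3 then show ?case by (auto simp: ps_simps ps_carrier_iff a_assoc)
  next
    case 4 then show ?case by (auto simp: ps_simps ps_carrier_iff a_comm)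
  next
    case 5 then show ?case by (auto simp: ps_simps ps_carrier_iff)
  next
    case (6 x)
    then show ?case
      by (intro bexI[where x = "\<lambda>m. \<ominus> x m"]) (auto simp: ps_simps ps_carrier_iff fun_eq_iff l_neg)
  qed
  show "comm_monoid (ps_ring R :: (('n::finite \<Rightarrow> nat) \<Rightarrow> 'a) ring)"
  proof (rule comm_monoidI, goal_cases)
    case 1 then show ?case by (simp add: ps_simps ps_mult_closed)
  next
    case 2 then show ?case by (auto simp: ps_simps ps_carrier_iff)
  next
    case (3 x y z)
    then show ?case
      by (simp add: ps_simps ps_assoc[of x y z] fun_eq_iff)
  next
    case (4 x)
    then show ?case unfolding ps_simps by (intro ext ps_one_mult) (simp add: ps_simps)
  next
    case (5 x y)
    then show ?case by (simp add: ps_simps ps_comm[of x y] fun_eq_iff)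
  qed
  fix x y z :: "('n \<Rightarrow> nat) \<Rightarrow> 'a"
  assume "x \<in> carrier (ps_ring R)" "y \<in> carrier (ps_ring R)" "z \<in> carrier (ps_ring R)"
  then show "(x \<oplus>\<^bsub>ps_ring R\<^esub> y) \<otimes>\<^bsub>ps_ring R\<^esub> z = x \<otimes>\<^bsub>ps_ring R\<^esub> z \<oplus>\<^bsub>ps_ring R\<^esub> y \<otimes>\<^bsub>ps_ring R\<^esub> z"
    by (simp add: ps_simps ps_distr fun_eq_iff)
qed

end



fun hp :: "('a, 'b) ring_scheme \<Rightarrow> 'a set \<Rightarrow> 'a \<Rightarrow> nat \<Rightarrow> 'a set" where
  "hp R A x 0 = {\<zero>\<^bsub>R\<^esub>}"
| "hp R A x (Suc n) = {a \<oplus>\<^bsub>R\<^esub> x \<otimes>\<^bsub>R\<^esub> y | a y. a \<in> A \<and> y \<in> hp R A x n}"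

definition mon :: "('a, 'b) ring_scheme \<Rightarrow> 'a set \<Rightarrow> 'a \<Rightarrow> nat \<Rightarrow> 'a set" where
  "mon R A x n = {x [^]\<^bsub>R\<^esub> n \<oplus>\<^bsub>R\<^esub> y | y. y \<in> hp R A x n}"

lemma (in ring) finsum_lessThan_Suc:
  assumes "\<And>i. i < Suc k \<Longrightarrow> F i \<in> carrier R"
  shows "(\<Oplus>i\<in>{..<Suc k}. F i) = F 0 \<oplus> (\<Oplus>i\<in>{..<k}. F (Suc i))"
proof -
  have eq: "{..<Suc k} = insert 0 (Suc ` {..<k})" by (rule lessThan_Suc_eq_insert_0)
  have "(\<Oplus>i\<in>{..<Suc k}. F i) = F 0 \<oplus> (\<Oplus>i\<in>Suc ` {..<k}. F i)"
    unfolding eq by (rule finsum_insert) (use assms in auto)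
  also have "(\<Oplus>i\<in>Suc ` {..<k}. F i) = (\<Oplus>i\<in>{..<k}. F (Suc i))"
    using assms by (subst finsum_reindex) auto
  finally show ?thesis .
qed

lemma (in ring) finsum_subring:
  assumes "subring S R" "finite I" "\<And>i. i \<in> I \<Longrightarrow> g i \<in> S"
  shows "finsum R g I \<in> S"
  using assms(2,3)
proof (induction I rule: finite_induct)
  case empty then show ?case using subringE(2)[OF assms(1)] by simp
next
  case (insert i I)
  have C: "\<And>j. j \<in> insert i I \<Longrightarrow> g j \<in> carrier R" using insert(4) subringE(1)[OF assms(1)] by blast
  have "finsum R g (insert i I) = g i \<oplus> finsum R g I"
    by (rule finsum_insert) (use insert C in auto)
  then show ?case using insert subringE(7)[OF assms(1)] by simp
qed

locale hctx = cring +
  fixes A x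
  assumes A: "subring A R" and x: "x \<in> carrier R"
begin

abbreviation L where "L \<equiv> hp R A x"
abbreviation M where "M \<equiv> mon R A x"

lemma AC: "a \<in> A \<Longrightarrow> a \<in> carrier R"
  using subringE(1)[OF A] by blast

lemma A0: "\<zero> \<in> A" and A1: "\<one> \<in> A"
  using subringE(2,3)[OF A] by auto

lemma L_SucI: "a \<in> A \<Longrightarrow> y \<in> L n \<Longrightarrow> a \<oplus> x \<otimes> y \<in> L (Suc n)"
  by auto

lemma L_SucE: "z \<in> L (Suc n) \<Longrightarrow> \<exists>a y. a \<in> A \<and> y \<in> L n \<and> z = a \<oplus> x \<otimes> y"
  by auto

declare hp.simps(2)[simp del]

lemma L_carrier: "y \<in> L n \<Longrightarrow> y \<in> carrier R"
  by (induction n arbitrary: y) (auto simp: AC x dest!: L_SucE)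

lemma L_zero: "\<zero> \<in> L n"
proof (induction n)
  case 0 then show ?case by simp
next
  case (Suc n)
  have "\<zero> = \<zero> \<oplus> x \<otimes> \<zero>" using x by simp
  then show ?case using L_SucI[OF A0 Suc] by simp
qed

lemma L_add: "y \<in> L n \<Longrightarrow> z \<in> L n \<Longrightarrow> y \<oplus> z \<in> L n"
proof (induction n arbitrary: y z)
  case 0 then show ?case by simp
next
  case (Suc n)
  obtain a y' where "a \<in> A" "y' \<in> L n" "y = a \<oplus> x \<otimes> y'"
    using L_SucE[of y n] Suc.prems by blast
  moreover obtain b z' where "b \<in> A" "z' \<in> L n" "z = b \<oplus> x \<otimes> z'"
    using L_SucE[of z n] Suc.prems by blast
  ultimately have h: "a \<in> A" "y' \<in> L n" "y = a \<oplus> x \<otimes> y'" "b \<in> A" "z' \<in> L n" "z = b \<oplus> x \<otimes> z'" by auto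
  have "y \<oplus> z = (a \<oplus> b) \<oplus> x \<otimes> (y' \<oplus> z')"
    using h AC[of a] AC[of b] L_carrier[of y'] L_carrier[of z'] x by algebra
  moreover have "a \<oplus> b \<in> A" using h subringE(7)[OF A] by blast
  ultimately show ?case using Suc.IH h L_SucI by auto
qed

lemma L_neg: "y \<in> L n \<Longrightarrow> \<ominus> y \<in> L n"
proof (induction n arbitrary: y)
  case 0 then show ?case by simp
next
  case (Suc n)
  obtain a y' where h: "a \<in> A" "y' \<in> L n" "y = a \<oplus> x \<otimes> y'"
    using L_SucE[of y n] Suc.prems by blast
  have "\<ominus> y = (\<ominus> a) \<oplus> x \<otimes> (\<ominus> y')"
    using h AC[of a] L_carrier[of y'] x by algebra
  moreover have "\<ominus> a \<in> A" using h subringE(5)[OF A] by blast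
  ultimately show ?case using Suc.IH h L_SucI by auto
qed

lemma L_smult: "c \<in> A \<Longrightarrow> y \<in> L n \<Longrightarrow> c \<otimes> y \<in> L n"
proof (induction n arbitrary: y)
  case 0 then show ?case using AC by simp
next
  case (Suc n)
  obtain a y' where h: "a \<in> A" "y' \<in> L n" "y = a \<oplus> x \<otimes> y'"
    using L_SucE[of y n] Suc.prems by blast
  have "c \<otimes> y = (c \<otimes> a) \<oplus> x \<otimes> (c \<otimes> y')"
    using h AC[of a] AC[OF Suc(2)] L_carrier[of y'] x by algebra
  moreover have "c \<otimes> a \<in> A" using h Suc(2) subringE(6)[OF A] by blast
  ultimately show ?case using Suc h L_SucI by auto
qed

lemma L_xmult: "y \<in> L n \<Longrightarrow> x \<otimes> y \<in> L (Suc n)"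
proof -
  assume "y \<in> L n"
  moreover have "x \<otimes> y = \<zero> \<oplus> x \<otimes> y" using x L_carrier[OF \<open>y \<in> L n\<close>] by simp
  then show ?thesis using L_SucI[OF A0 \<open>y \<in> L n\<close>] by simp
qed

lemma L_A: "a \<in> A \<Longrightarrow> a \<in> L (Suc n)"
proof -
  assume "a \<in> A"
  moreover have "a = a \<oplus> x \<otimes> \<zero>" using x AC[OF \<open>a \<in> A\<close>] by simp
  then show ?thesis using L_SucI[OF \<open>a \<in> A\<close> L_zero] by simp
qed

lemma L_mono_Suc: "y \<in> L n \<Longrightarrow> y \<in> L (Suc n)"
proof (induction n arbitrary: y)
  case 0 then show ?case using L_A[OF A0] by simp
next
  case (Suc n)
  obtain a y' where h: "a \<in> A" "y' \<in> L n" "y = a \<oplus> x \<otimes> y'"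
    using L_SucE[of y n] Suc.prems by blast
  then show ?case using Suc.IH[of y'] L_SucI by auto
qed

lemma L_mono_add: "y \<in> L n \<Longrightarrow> y \<in> L (n + d)"
  by (induction d) (auto intro: L_mono_Suc)

lemma L_mono: "n \<le> k \<Longrightarrow> y \<in> L n \<Longrightarrow> y \<in> L k"
  using L_mono_add[of y n "k - n"] by simp

lemma L_pow_mult: "y \<in> L n \<Longrightarrow> x [^] k \<otimes> y \<in> L (k + n)"
proof (induction k)
  case 0 then show ?case using L_carrier by simp
next
  case (Suc k)
  have "x [^] Suc k \<otimes> y = x \<otimes> (x [^] k \<otimes> y)"
    using x L_carrier[OF Suc(2)] by (simp add: nat_pow_Suc2 m_assoc m_lcomm)
  then show ?case using L_xmult[OF Suc.IH[OF Suc(2)]] by simp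
qed

lemma L_mult: "y \<in> L n \<Longrightarrow> z \<in> L k \<Longrightarrow> y \<otimes> z \<in> L (n + k)"
proof (induction n arbitrary: y)
  case 0 then show ?case using L_carrier[of z] L_zero by simp
next
  case (Suc n)
  obtain a y' where h: "a \<in> A" "y' \<in> L n" "y = a \<oplus> x \<otimes> y'"
    using L_SucE[of y n] Suc.prems by blast
  have "y \<otimes> z = a \<otimes> z \<oplus> x \<otimes> (y' \<otimes> z)"
    using h AC[of a] L_carrier[of y'] L_carrier[OF Suc(3)] x by algebra
  moreover have "a \<otimes> z \<in> L (Suc n + k)"
    using L_mono[OF _ L_smult[OF h(1) Suc(3)], of "Suc n + k"] by simp
  moreover have "x \<otimes> (y' \<otimes> z) \<in> L (Suc n + k)"
    using L_xmult[OF Suc.IH[OF h(2) Suc(3)]] by simp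
  ultimately show ?case using L_add by simp
qed

lemma L_pow: "x [^] n \<in> L (Suc n)"
proof -
  have "\<one> \<in> L 1" using L_A A1 by simp
  then have "x [^] n \<otimes> \<one> \<in> L (n + 1)" by (rule L_pow_mult)
  then show ?thesis using x by simp
qed

lemma L_sum: "finite I \<Longrightarrow> (\<And>i. i \<in> I \<Longrightarrow> g i \<in> L n) \<Longrightarrow> finsum R g I \<in> L n"
proof (induction I rule: finite_induct)
  case empty then show ?case using L_zero by simp
next
  case (insert i I)
  have "finsum R g (insert i I) = g i \<oplus> finsum R g I"
    by (rule finsum_insert) (use insert L_carrier in auto)
  then show ?case using insert L_add by simp
qed

lemma L_polysum: "(\<And>i. i < n \<Longrightarrow> c i \<in> A) \<Longrightarrow> (\<Oplus>i\<in>{..<n}. c i \<otimes> x [^] i) \<in> L n"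
  by (rule L_sum) (auto intro!: L_smult L_mono[OF _ L_pow])

lemma L_to_sum: "y \<in> L n \<Longrightarrow> \<exists>c. (\<forall>i<n. c i \<in> A) \<and> y = (\<Oplus>i\<in>{..<n}. c i \<otimes> x [^] i)"
proof (induction n arbitrary: y)
  case 0 then show ?case by simp
next
  case (Suc n)
  obtain a y' where h: "a \<in> A" "y' \<in> L n" "y = a \<oplus> x \<otimes> y'"
    using L_SucE[of y n] Suc.prems by blast
  obtain c where c: "\<forall>i<n. c i \<in> A" "y' = (\<Oplus>i\<in>{..<n}. c i \<otimes> x [^] i)"
    using Suc.IH[OF h(2)] by blast
  define c' where "c' i = (case i of 0 \<Rightarrow> a | Suc j \<Rightarrow> c j)" for i
  have c'A: "\<forall>i<Suc n. c' i \<in> A" using c h by (auto simp: c'_def split: nat.splits)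
  have "(\<Oplus>i\<in>{..<Suc n}. c' i \<otimes> x [^] i) = c' 0 \<otimes> x [^] (0::nat) \<oplus> (\<Oplus>i\<in>{..<n}. c' (Suc i) \<otimes> x [^] Suc i)"
    by (rule finsum_lessThan_Suc) (use c'A AC x in auto)
  also have "(\<Oplus>i\<in>{..<n}. c' (Suc i) \<otimes> x [^] Suc i) = (\<Oplus>i\<in>{..<n}. x \<otimes> (c i \<otimes> x [^] i))"
    by (rule finsum_cong') (use c AC x in \<open>auto simp: c'_def nat_pow_Suc2 m_ac\<close>)
  also have "\<dots> = x \<otimes> y'"
    using c AC x by (simp add: finsum_rdistr Pi_def)
  finally have "(\<Oplus>i\<in>{..<Suc n}. c' i \<otimes> x [^] i) = y"
    using h AC by (simp add: c'_def)
  then show ?case using c'A by metis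
qed

lemma M_carrier: "y \<in> M n \<Longrightarrow> y \<in> carrier R"
  using L_carrier x by (auto simp: mon_def)

lemma M_L_mult: "y \<in> M n \<Longrightarrow> z \<in> L k \<Longrightarrow> y \<otimes> z \<in> L (n + k)"
proof -
  assume "y \<in> M n" "z \<in> L k"
  then obtain l where l: "l \<in> L n" "y = x [^] n \<oplus> l" by (auto simp: mon_def)
  have "y \<otimes> z = x [^] n \<otimes> z \<oplus> l \<otimes> z"
    using l L_carrier[OF l(1)] L_carrier[OF \<open>z \<in> L k\<close>] x by (simp add: l_distr)
  then show ?thesis using L_add L_pow_mult[OF \<open>z \<in> L k\<close>] L_mult[OF l(1) \<open>z \<in> L k\<close>] by simp
qed

lemma M_mult: "y \<in> M n \<Longrightarrow> z \<in> M k \<Longrightarrow> y \<otimes> z \<in> M (n + k)"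
proof -
  assume "y \<in> M n" "z \<in> M k"
  then obtain l where l: "l \<in> L k" "z = x [^] k \<oplus> l" by (auto simp: mon_def)
  have yC: "y \<in> carrier R" using M_carrier \<open>y \<in> M n\<close> by blast
  obtain l' where l': "l' \<in> L n" "y = x [^] n \<oplus> l'" using \<open>y \<in> M n\<close> by (auto simp: mon_def)
  have "y \<otimes> z = x [^] (n + k) \<oplus> (x [^] k \<otimes> l' \<oplus> y \<otimes> l)"
    using l l' L_carrier[OF l(1)] L_carrier[OF l'(1)] x
    by (simp add: r_distr l_distr nat_pow_mult[symmetric] m_comm a_assoc a_lcomm)
  moreover have "x [^] k \<otimes> l' \<oplus> y \<otimes> l \<in> L (n + k)"
    using L_add L_pow_mult[OF l'(1), of k] M_L_mult[OF \<open>y \<in> M n\<close> l(1)] by (simp add: add.commute)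
  ultimately show ?thesis by (auto simp: mon_def)
qed

lemma M_add_L: "y \<in> M n \<Longrightarrow> z \<in> L n \<Longrightarrow> y \<oplus> z \<in> M n"
proof -
  assume "y \<in> M n" "z \<in> L n"
  then obtain l where l: "l \<in> L n" "y = x [^] n \<oplus> l" by (auto simp: mon_def)
  then have "y \<oplus> z = x [^] n \<oplus> (l \<oplus> z)"
    using L_carrier \<open>z \<in> L n\<close> x by (simp add: a_assoc)
  then show ?thesis using L_add l \<open>z \<in> L n\<close> by (auto simp: mon_def)
qed

lemma M_x: "x \<in> M 1"
proof -
  have "x = x [^] (1::nat) \<oplus> \<zero>" using x by simp
  then show ?thesis using L_zero unfolding mon_def by blast
qed

lemma elim:
  assumes "finite I"
  shows "\<And>C n. (\<forall>i\<in>I. C i i \<in> M n) \<Longrightarrow> (\<forall>i\<in>I. \<forall>j\<in>I. i \<noteq> j \<longrightarrow> C i j \<in> L n) \<Longrightarrow>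
    g \<in> I \<rightarrow> carrier R \<Longrightarrow> (\<forall>i\<in>I. (\<Oplus>j\<in>I. C i j \<otimes> g j) = \<zero>) \<Longrightarrow>
    \<exists>k q. 1 \<le> k \<and> q \<in> M k \<and> (\<forall>i\<in>I. q \<otimes> g i = \<zero>)"
  using assms
proof (induction I rule: finite_induct)
  case empty
  show ?case using M_x by (intro exI[of _ "1::nat"] exI[of _ x]) auto
next
  case (insert i0 I C n)
  have gC: "\<And>j. j \<in> insert i0 I \<Longrightarrow> g j \<in> carrier R" using insert.prems(3) by blast
  have CC: "\<And>i j. i \<in> insert i0 I \<Longrightarrow> j \<in> insert i0 I \<Longrightarrow> C i j \<in> carrier R"
  proof -
    fix i j assume "i \<in> insert i0 I" "j \<in> insert i0 I"
    then show "C i j \<in> carrier R"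
      using insert.prems(1,2) M_carrier[of "C i j" n] L_carrier[of "C i j" n] by (cases "i = j") auto
  qed
  have i0I: "i0 \<in> insert i0 I" by simp
  define C' where "C' i j = C i0 i0 \<otimes> C i j \<oplus> (\<ominus> C i i0) \<otimes> C i0 j" for i j
  define s where "s i = (\<Oplus>j\<in>I. C i j \<otimes> g j)" for i
  have sC: "\<And>i. i \<in> insert i0 I \<Longrightarrow> s i \<in> carrier R"
    unfolding s_def using CC gC by (auto intro!: finsum_closed)
  have eq: "\<And>i. i \<in> insert i0 I \<Longrightarrow> s i = \<ominus> (C i i0 \<otimes> g i0)"
  proof -
    fix i assume i: "i \<in> insert i0 I"
    have e0: "(\<Oplus>j\<in>insert i0 I. C i j \<otimes> g j) = C i i0 \<otimes> g i0 \<oplus> s i"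
      unfolding s_def by (rule finsum_insert) (use insert.hyps CC[OF i] gC in auto)
    have "(\<Oplus>j\<in>insert i0 I. C i j \<otimes> g j) = \<zero>" using insert.prems(4) i by blast
    then have "C i i0 \<otimes> g i0 \<oplus> s i = \<zero>" using e0 by simp
    then have "s i \<oplus> C i i0 \<otimes> g i0 = \<zero>" using CC[OF i i0I] gC[OF i0I] sC[OF i] by (simp add: a_comm)
    then show "s i = \<ominus> (C i i0 \<otimes> g i0)"
      using CC[OF i i0I] gC[OF i0I] sC[OF i] by (intro minus_equality[symmetric]) auto
  qed
  have newdiag: "\<forall>i\<in>I. C' i i \<in> M (n + n)"
  proof
    fix i assume i: "i \<in> I"
    have "C i0 i0 \<otimes> C i i \<in> M (n + n)" by (rule M_mult) (use insert.prems(1) i in auto)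
    moreover have "(\<ominus> C i i0) \<otimes> C i0 i \<in> L (n + n)"
    proof -
      have "i \<noteq> i0" using i insert.hyps(2) by blast
      then have h: "C i i0 \<in> L n" "C i0 i \<in> L n" using insert.prems(2) i by auto
      show ?thesis using L_mult[OF L_neg[OF h(1)] h(2)] .
    qed
    ultimately show "C' i i \<in> M (n + n)" unfolding C'_def by (rule M_add_L)
  qed
  have newoff: "\<forall>i\<in>I. \<forall>j\<in>I. i \<noteq> j \<longrightarrow> C' i j \<in> L (n + n)"
  proof (intro ballI impI)
    fix i j assume ij: "i \<in> I" "j \<in> I" "i \<noteq> j"
    have "C i0 i0 \<otimes> C i j \<in> L (n + n)" by (rule M_L_mult) (use insert.prems(1,2) ij in auto)
    moreover have "(\<ominus> C i i0) \<otimes> C i0 j \<in> L (n + n)"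
    proof -
      have "i \<noteq> i0" "j \<noteq> i0" using ij insert.hyps(2) by auto
      then have h: "C i i0 \<in> L n" "C i0 j \<in> L n" using insert.prems(2) ij by auto
      show ?thesis using L_mult[OF L_neg[OF h(1)] h(2)] .
    qed
    ultimately show "C' i j \<in> L (n + n)" unfolding C'_def by (rule L_add)
  qed
  have neweq: "\<forall>i\<in>I. (\<Oplus>j\<in>I. C' i j \<otimes> g j) = \<zero>"
  proof
    fix i assume i: "i \<in> I"
    then have i': "i \<in> insert i0 I" by simp
    have tm: "C' i j \<otimes> g j = C i0 i0 \<otimes> (C i j \<otimes> g j) \<oplus> (\<ominus> C i i0) \<otimes> (C i0 j \<otimes> g j)"
      if j: "j \<in> I" for j
    proof -
      have j': "j \<in> insert i0 I" using j by simp
      show ?thesis unfolding C'_def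
        using CC[OF i0I i0I] CC[OF i' j'] CC[OF i' i0I] CC[OF i0I j'] gC[OF j']
        by (simp add: l_distr m_assoc)
    qed
    have "(\<Oplus>j\<in>I. C' i j \<otimes> g j) = (\<Oplus>j\<in>I. C i0 i0 \<otimes> (C i j \<otimes> g j) \<oplus> (\<ominus> C i i0) \<otimes> (C i0 j \<otimes> g j))"
      by (rule finsum_cong') (use CC gC i tm in auto)
    also have "\<dots> = (\<Oplus>j\<in>I. C i0 i0 \<otimes> (C i j \<otimes> g j)) \<oplus> (\<Oplus>j\<in>I. (\<ominus> C i i0) \<otimes> (C i0 j \<otimes> g j))"
      by (rule finsum_addf) (use CC gC i in auto)
    also have "(\<Oplus>j\<in>I. C i0 i0 \<otimes> (C i j \<otimes> g j)) = C i0 i0 \<otimes> s i"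
      unfolding s_def by (rule finsum_rdistr[symmetric]) (use CC gC i insert.hyps(1) in auto)
    also have "(\<Oplus>j\<in>I. (\<ominus> C i i0) \<otimes> (C i0 j \<otimes> g j)) = (\<ominus> C i i0) \<otimes> s i0"
      unfolding s_def by (rule finsum_rdistr[symmetric]) (use CC gC i insert.hyps(1) in auto)
    also have "C i0 i0 \<otimes> s i \<oplus> (\<ominus> C i i0) \<otimes> s i0 = \<zero>"
    proof -
      have c: "C i0 i0 \<in> carrier R" "C i i0 \<in> carrier R" "g i0 \<in> carrier R"
        using CC[OF i0I i0I] CC[OF i' i0I] gC[OF i0I] by auto
      show ?thesis unfolding eq[OF i'] eq[OF i0I] using c by algebra
    qed
    finally show "(\<Oplus>j\<in>I. C' i j \<otimes> g j) = \<zero>" .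
  qed
  have gI: "g \<in> I \<rightarrow> carrier R" using insert.prems(3) by auto
  obtain k q where kq: "1 \<le> k" "q \<in> M k" "\<forall>i\<in>I. q \<otimes> g i = \<zero>"
    using insert.IH[of C' "n + n", OF newdiag newoff gI neweq] by blast
  have qC: "q \<in> carrier R" using M_carrier[OF kq(2)] .
  define q' where "q' = q \<otimes> C i0 i0"
  have "q' \<in> M (k + n)" unfolding q'_def by (rule M_mult) (use kq insert.prems(1) in auto)
  moreover have "\<forall>i\<in>insert i0 I. q' \<otimes> g i = \<zero>"
  proof
    fix i assume i: "i \<in> insert i0 I"
    have c0: "C i0 i0 \<in> carrier R" using CC[OF i0I i0I] .
    show "q' \<otimes> g i = \<zero>"
    proof (cases "i = i0")
      case True
      have e2: "C i0 i0 \<otimes> g i0 = \<ominus> s i0"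
        using eq[OF i0I] CC[OF i0I i0I] gC[OF i0I] by simp
      have "q \<otimes> s i0 = (\<Oplus>j\<in>I. q \<otimes> (C i0 j \<otimes> g j))"
        unfolding s_def by (rule finsum_rdistr) (use CC gC qC insert.hyps(1) in auto)
      also have "\<dots> = (\<Oplus>j\<in>I. \<zero>)"
      proof (rule finsum_cong')
        fix j assume j: "j \<in> I"
        then have j': "j \<in> insert i0 I" by simp
        have "q \<otimes> (C i0 j \<otimes> g j) = C i0 j \<otimes> (q \<otimes> g j)"
          using qC CC[OF i0I j'] gC[OF j'] by (simp add: m_lcomm)
        then show "q \<otimes> (C i0 j \<otimes> g j) = \<zero>" using kq(3) j CC[OF i0I j'] by simp
      qed auto
      also have "\<dots> = \<zero>" by simp
      finally have qs: "q \<otimes> s i0 = \<zero>" .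
      have "q' \<otimes> g i = q \<otimes> (C i0 i0 \<otimes> g i0)" unfolding q'_def True
        using qC c0 gC[OF i0I] by (simp add: m_assoc)
      also have "\<dots> = \<ominus> (q \<otimes> s i0)" unfolding e2 using qC sC[OF i0I] by (simp add: r_minus)
      finally show ?thesis using qs by simp
    next
      case False
      then have iI: "i \<in> I" using i by simp
      have "q' \<otimes> g i = C i0 i0 \<otimes> (q \<otimes> g i)" unfolding q'_def
        using qC c0 gC[OF i] by (simp add: m_assoc m_lcomm)
      then show ?thesis using kq(3) iI c0 by simp
    qed
  qed
  ultimately show ?case using kq(1) by (intro exI[of _ "k + n"] exI[of _ q']) auto
qed


lemma M_integral: "q \<in> M k \<Longrightarrow> 1 \<le> k \<Longrightarrow> q = \<zero> \<Longrightarrow> integral_over R A x"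
proof -
  assume q: "q \<in> M k" "1 \<le> k" "q = \<zero>"
  then obtain l where l: "l \<in> L k" "q = x [^] k \<oplus> l" by (auto simp: mon_def)
  obtain c where c: "\<forall>i<k. c i \<in> A" "l = (\<Oplus>i\<in>{..<k}. c i \<otimes> x [^] i)"
    using L_to_sum[OF l(1)] by blast
  show ?thesis unfolding integral_over_def
    using q(2,3) l(2) c by (intro exI[of _ k] exI[of _ c]) auto
qed

lemma det_trick:
  assumes I: "finite I" and g: "g \<in> I \<rightarrow> carrier R"
    and rel: "\<And>i. i \<in> I \<Longrightarrow> \<exists>a. a \<in> I \<rightarrow> A \<and> x \<otimes> g i = (\<Oplus>j\<in>I. a j \<otimes> g j)"
    and u: "u \<in> I \<rightarrow> carrier R" and one: "\<one> = (\<Oplus>j\<in>I. u j \<otimes> g j)"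
  shows "integral_over R A x"
proof -
  have "\<forall>i\<in>I. \<exists>a. a \<in> I \<rightarrow> A \<and> x \<otimes> g i = (\<Oplus>j\<in>I. a j \<otimes> g j)" using rel by blast
  then obtain a where a: "\<And>i. i \<in> I \<Longrightarrow> a i \<in> I \<rightarrow> A \<and> x \<otimes> g i = (\<Oplus>j\<in>I. a i j \<otimes> g j)"
    using bchoice[of I "\<lambda>i a. a \<in> I \<rightarrow> A \<and> x \<otimes> g i = (\<Oplus>j\<in>I. a j \<otimes> g j)"] by blast
  have aA: "\<And>i j. i \<in> I \<Longrightarrow> j \<in> I \<Longrightarrow> a i j \<in> A" using a by blast
  have aC: "\<And>i j. i \<in> I \<Longrightarrow> j \<in> I \<Longrightarrow> a i j \<in> carrier R" using aA AC by blast
  have gC: "\<And>j. j \<in> I \<Longrightarrow> g j \<in> carrier R" using g by blast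
  have m1A: "\<ominus> \<one> \<in> A" using subringE(5)[OF A] A1 by blast
  have m1C: "\<ominus> \<one> \<in> carrier R" by simp
  define C where "C i j = (if i = j then x else \<zero>) \<oplus> (\<ominus> \<one>) \<otimes> a i j" for i j
  have lin: "\<And>i j. i \<in> I \<Longrightarrow> j \<in> I \<Longrightarrow> (\<ominus> \<one>) \<otimes> a i j \<in> L 1"
    using L_smult[OF m1A L_A[OF aA]] by simp
  have diag: "\<forall>i\<in>I. C i i \<in> M 1"
  proof
    fix i assume i: "i \<in> I"
    have "C i i = x [^] (1::nat) \<oplus> (\<ominus> \<one>) \<otimes> a i i" using x by (simp add: C_def)
    then show "C i i \<in> M 1" using lin[OF i i] unfolding mon_def by blast
  qed
  have off: "\<forall>i\<in>I. \<forall>j\<in>I. i \<noteq> j \<longrightarrow> C i j \<in> L 1"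
  proof (intro ballI impI)
    fix i j assume ij: "i \<in> I" "j \<in> I" "i \<noteq> j"
    have "C i j = (\<ominus> \<one>) \<otimes> a i j" using ij aC[OF ij(1,2)] by (simp add: C_def)
    then show "C i j \<in> L 1" using lin[OF ij(1,2)] by simp
  qed
  have eqs: "\<forall>i\<in>I. (\<Oplus>j\<in>I. C i j \<otimes> g j) = \<zero>"
  proof
    fix i assume i: "i \<in> I"
    have tm: "C i j \<otimes> g j = (if i = j then x \<otimes> g j else \<zero>) \<oplus> (\<ominus> \<one>) \<otimes> (a i j \<otimes> g j)"
      if j: "j \<in> I" for j
      using aC[OF i j] gC[OF j] x by (simp add: C_def l_distr m_assoc)
    have "(\<Oplus>j\<in>I. C i j \<otimes> g j) = (\<Oplus>j\<in>I. (if i = j then x \<otimes> g j else \<zero>) \<oplus> (\<ominus> \<one>) \<otimes> (a i j \<otimes> g j))"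
      by (rule finsum_cong') (use tm aC gC x i in auto)
    also have "\<dots> = (\<Oplus>j\<in>I. (if i = j then x \<otimes> g j else \<zero>)) \<oplus> (\<Oplus>j\<in>I. (\<ominus> \<one>) \<otimes> (a i j \<otimes> g j))"
      by (rule finsum_addf) (use aC gC x i in auto)
    also have "(\<Oplus>j\<in>I. (if i = j then x \<otimes> g j else \<zero>)) = x \<otimes> g i"
      using finsum_singleton[where i=i and A=I and f="\<lambda>j. x \<otimes> g j"] i I gC x by auto
    also have "(\<Oplus>j\<in>I. (\<ominus> \<one>) \<otimes> (a i j \<otimes> g j)) = (\<ominus> \<one>) \<otimes> (\<Oplus>j\<in>I. a i j \<otimes> g j)"
      by (rule finsum_rdistr[symmetric]) (use aC gC i I in auto)
    also have "(\<Oplus>j\<in>I. a i j \<otimes> g j) = x \<otimes> g i" using a[OF i] by simp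
    also have "x \<otimes> g i \<oplus> (\<ominus> \<one>) \<otimes> (x \<otimes> g i) = \<zero>"
      using x gC[OF i] by (simp add: l_minus r_neg)
    finally show "(\<Oplus>j\<in>I. C i j \<otimes> g j) = \<zero>" .
  qed
  obtain k q where kq: "1 \<le> k" "q \<in> M k" "\<forall>i\<in>I. q \<otimes> g i = \<zero>"
    using elim[OF I, of C 1, OF diag off g eqs] by blast
  have qC: "q \<in> carrier R" using M_carrier[OF kq(2)] .
  have "q = q \<otimes> (\<Oplus>j\<in>I. u j \<otimes> g j)" unfolding one[symmetric] using qC by simp
  also have "\<dots> = (\<Oplus>j\<in>I. q \<otimes> (u j \<otimes> g j))"
    by (rule finsum_rdistr) (use qC u gC I in auto)
  also have "\<dots> = (\<Oplus>j\<in>I. \<zero>)"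
  proof (rule finsum_cong')
    fix j assume j: "j \<in> I"
    have "q \<otimes> (u j \<otimes> g j) = u j \<otimes> (q \<otimes> g j)"
      using qC u j gC[OF j] by (simp add: m_lcomm Pi_def)
    then show "q \<otimes> (u j \<otimes> g j) = \<zero>" using kq(3) j u by (auto simp: Pi_def)
  qed auto
  also have "\<dots> = \<zero>" by simp
  finally show ?thesis using M_integral kq by blast
qed

end



context hctx
begin

lemma L_top: "y \<in> L (Suc n) \<Longrightarrow> \<exists>z a. z \<in> L n \<and> a \<in> A \<and> y = z \<oplus> a \<otimes> x [^] n"
proof (induction n arbitrary: y)
  case 0
  obtain a y' where h: "a \<in> A" "y' \<in> L 0" "y = a \<oplus> x \<otimes> y'"
    using L_SucE[of y 0] 0 by blast
  have "y = \<zero> \<oplus> a \<otimes> x [^] (0::nat)" using h AC[of a] x by simp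
  then show ?case using h(1) L_zero by blast
next
  case (Suc n)
  obtain a y' where h: "a \<in> A" "y' \<in> L (Suc n)" "y = a \<oplus> x \<otimes> y'"
    using L_SucE[of y "Suc n"] Suc.prems by blast
  obtain z a' where z: "z \<in> L n" "a' \<in> A" "y' = z \<oplus> a' \<otimes> x [^] n"
    using Suc.IH[OF h(2)] by blast
  have xp: "x [^] Suc n = x \<otimes> x [^] n" using x by (simp add: m_comm)
  have c: "a \<in> carrier R" "a' \<in> carrier R" "z \<in> carrier R" "x [^] n \<in> carrier R"
    using AC h z L_carrier x by auto
  have "y = (a \<oplus> x \<otimes> z) \<oplus> a' \<otimes> (x \<otimes> x [^] n)"
    unfolding h(3) z(3) using c x by algebra
  then have "y = (a \<oplus> x \<otimes> z) \<oplus> a' \<otimes> x [^] Suc n" unfolding xp .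
  moreover have "a \<oplus> x \<otimes> z \<in> L (Suc n)" using L_SucI[OF h(1) z(1)] .
  ultimately show ?case using z(2) by blast
qed

context
  fixes d :: nat
  assumes d1: "1 \<le> d" and xd: "x [^] d \<in> L d"
begin

lemma L_xclosed: "y \<in> L d \<Longrightarrow> x \<otimes> y \<in> L d"
proof -
  assume y: "y \<in> L d"
  obtain d' where d': "d = Suc d'" using d1 by (cases d) auto
  obtain z a where z: "z \<in> L d'" "a \<in> A" "y = z \<oplus> a \<otimes> x [^] d'"
    using L_top[of y d'] y d' by blast
  have c: "a \<in> carrier R" "z \<in> carrier R" "x [^] d' \<in> carrier R"
    using AC z L_carrier x by auto
  have "x \<otimes> y = x \<otimes> z \<oplus> a \<otimes> (x \<otimes> x [^] d')"
    unfolding z(3) using c x by algebra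
  also have "x \<otimes> x [^] d' = x [^] d" using x d' by (simp add: m_comm)
  finally have "x \<otimes> y = x \<otimes> z \<oplus> a \<otimes> x [^] d" .
  moreover have "x \<otimes> z \<in> L d" using L_xmult[OF z(1)] d' by simp
  moreover have "a \<otimes> x [^] d \<in> L d" using L_smult[OF z(2) xd] .
  ultimately show ?thesis using L_add by simp
qed

lemma L_mult_closed: "y \<in> L n \<Longrightarrow> z \<in> L d \<Longrightarrow> y \<otimes> z \<in> L d"
proof (induction n arbitrary: y)
  case 0 then show ?case using L_carrier[of z] L_zero by simp
next
  case (Suc n)
  obtain a y' where h: "a \<in> A" "y' \<in> L n" "y = a \<oplus> x \<otimes> y'"
    using L_SucE[of y n] Suc.prems by blast
  have "y \<otimes> z = a \<otimes> z \<oplus> x \<otimes> (y' \<otimes> z)"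
    using h AC[of a] L_carrier[of y'] L_carrier[OF Suc(3)] x by algebra
  moreover have "a \<otimes> z \<in> L d" using L_smult[OF h(1) Suc(3)] .
  moreover have "x \<otimes> (y' \<otimes> z) \<in> L d" using L_xclosed[OF Suc.IH[OF h(2) Suc(3)]] .
  ultimately show ?case using L_add by simp
qed

lemma L_subring: "subring (L d) R"
proof (rule subringI)
  show "L d \<subseteq> carrier R" using L_carrier by blast
  show "\<one> \<in> L d" using L_mono[of 1 d \<one>] d1 L_A[OF A1, of 0] by simp
  show "\<And>h. h \<in> L d \<Longrightarrow> \<ominus> h \<in> L d" using L_neg by blast
  show "\<And>h1 h2. h1 \<in> L d \<Longrightarrow> h2 \<in> L d \<Longrightarrow> h1 \<otimes> h2 \<in> L d" using L_mult_closed by blast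
  show "\<And>h1 h2. h1 \<in> L d \<Longrightarrow> h2 \<in> L d \<Longrightarrow> h1 \<oplus> h2 \<in> L d" using L_add by blast
qed

lemma L_x: "x \<in> L d"
proof -
  have "\<one> \<in> L d" using L_mono[of 1 d \<one>] d1 L_A[OF A1, of 0] by simp
  then show ?thesis using L_xclosed[of \<one>] x by simp
qed

lemma A_L: "A \<subseteq> L d"
proof
  fix a assume "a \<in> A"
  then show "a \<in> L d" using L_mono[of 1 d a] d1 L_A[of a 0] by simp
qed

end

end

definition span :: "('a, 'b) ring_scheme \<Rightarrow> 'a set \<Rightarrow> 'a set \<Rightarrow> 'a set" where
  "span R S E = {y. \<exists>c. c \<in> E \<rightarrow> S \<and> y = (\<Oplus>\<^bsub>R\<^esub>e\<in>E. c e \<otimes>\<^bsub>R\<^esub> e)}"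

lemma (in ring) subring_pow_closed: "subring H R \<Longrightarrow> h \<in> H \<Longrightarrow> h [^] (n::nat) \<in> H"
proof (induction n)
  case 0 then show ?case using subringE(3) by simp
next
  case (Suc n) then show ?case using subringE(6) by simp
qed

locale spctx = cring +
  fixes S
  assumes S: "subring S R"
begin

lemma SC: "s \<in> S \<Longrightarrow> s \<in> carrier R"
  using subringE(1)[OF S] by blast

lemma span_carrier: "E \<subseteq> carrier R \<Longrightarrow> y \<in> span R S E \<Longrightarrow> y \<in> carrier R"
  unfolding span_def using SC by (auto intro!: finsum_closed)

lemma span_zero: "E \<subseteq> carrier R \<Longrightarrow> \<zero> \<in> span R S E"
proof -
  assume E: "E \<subseteq> carrier R"
  have "(\<Oplus>e\<in>E. \<zero> \<otimes> e) = (\<Oplus>e\<in>E. \<zero>)" by (rule finsum_cong') (use E in auto)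
  then have eq: "(\<Oplus>e\<in>E. \<zero> \<otimes> e) = \<zero>" by simp
  show ?thesis unfolding span_def
    by (intro CollectI exI[of _ "\<lambda>_. \<zero>"] conjI) (use eq subringE(2)[OF S] in auto)
qed

lemma span_add: "finite E \<Longrightarrow> E \<subseteq> carrier R \<Longrightarrow> y \<in> span R S E \<Longrightarrow> z \<in> span R S E \<Longrightarrow> y \<oplus> z \<in> span R S E"
proof -
  assume E: "finite E" "E \<subseteq> carrier R" "y \<in> span R S E" "z \<in> span R S E"
  then obtain c c' where c: "c \<in> E \<rightarrow> S" "y = (\<Oplus>e\<in>E. c e \<otimes> e)" "c' \<in> E \<rightarrow> S" "z = (\<Oplus>e\<in>E. c' e \<otimes> e)"
    unfolding span_def by blast
  have cC: "\<And>e. e \<in> E \<Longrightarrow> c e \<in> carrier R" "\<And>e. e \<in> E \<Longrightarrow> c' e \<in> carrier R" using c SC by auto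
  have "y \<oplus> z = (\<Oplus>e\<in>E. c e \<otimes> e \<oplus> c' e \<otimes> e)"
    unfolding c(2,4) by (rule finsum_addf[symmetric]) (use E cC in auto)
  also have "\<dots> = (\<Oplus>e\<in>E. (c e \<oplus> c' e) \<otimes> e)"
    by (rule finsum_cong') (use E cC in \<open>auto simp: l_distr\<close>)
  finally have eq: "y \<oplus> z = (\<Oplus>e\<in>E. (c e \<oplus> c' e) \<otimes> e)" .
  have cS: "(\<lambda>e. c e \<oplus> c' e) \<in> E \<rightarrow> S" using c subringE(7)[OF S] by auto
  show ?thesis unfolding span_def
    by (intro CollectI exI[of _ "\<lambda>e. c e \<oplus> c' e"] conjI) (use eq cS in auto)
qed

lemma span_smult: "finite E \<Longrightarrow> E \<subseteq> carrier R \<Longrightarrow> s \<in> S \<Longrightarrow> y \<in> span R S E \<Longrightarrow> s \<otimes> y \<in> span R S E"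
proof -
  assume E: "finite E" "E \<subseteq> carrier R" "s \<in> S" "y \<in> span R S E"
  then obtain c where c: "c \<in> E \<rightarrow> S" "y = (\<Oplus>e\<in>E. c e \<otimes> e)"
    unfolding span_def by blast
  have cC: "\<And>e. e \<in> E \<Longrightarrow> c e \<in> carrier R" using c SC by auto
  have sC: "s \<in> carrier R" using SC E by blast
  have "s \<otimes> y = (\<Oplus>e\<in>E. s \<otimes> (c e \<otimes> e))"
    unfolding c(2) by (rule finsum_rdistr) (use E cC sC in auto)
  also have "\<dots> = (\<Oplus>e\<in>E. (s \<otimes> c e) \<otimes> e)"
    by (rule finsum_cong') (use E cC sC in \<open>auto simp: m_assoc\<close>)
  finally have eq: "s \<otimes> y = (\<Oplus>e\<in>E. (s \<otimes> c e) \<otimes> e)" .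
  have cS: "(\<lambda>e. s \<otimes> c e) \<in> E \<rightarrow> S" using c subringE(6)[OF S] E by auto
  show ?thesis unfolding span_def
    by (intro CollectI exI[of _ "\<lambda>e. s \<otimes> c e"] conjI) (use eq cS in auto)
qed

lemma span_incl: "finite E \<Longrightarrow> E \<subseteq> carrier R \<Longrightarrow> e0 \<in> E \<Longrightarrow> e0 \<in> span R S E"
proof -
  assume E: "finite E" "E \<subseteq> carrier R" "e0 \<in> E"
  have "(\<Oplus>e\<in>E. (if e = e0 then \<one> else \<zero>) \<otimes> e) = (\<Oplus>e\<in>E. (if e0 = e then e else \<zero>))"
    by (rule finsum_cong') (use E in auto)
  also have "\<dots> = e0" using finsum_singleton[where i=e0 and A=E and f="\<lambda>e. e"] E by auto
  finally have eq: "(\<Oplus>e\<in>E. (if e = e0 then \<one> else \<zero>) \<otimes> e) = e0" .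
  have cS: "(\<lambda>e. if e = e0 then \<one> else \<zero>) \<in> E \<rightarrow> S" using subringE(2,3)[OF S] by auto
  show ?thesis unfolding span_def
    by (intro CollectI exI[of _ "\<lambda>e. if e = e0 then \<one> else \<zero>"] conjI) (use eq cS in auto)
qed

lemma span_sum:
  assumes E: "finite E" "E \<subseteq> carrier R" and I: "finite I" "\<And>i. i \<in> I \<Longrightarrow> F i \<in> span R S E"
  shows "finsum R F I \<in> span R S E"
  using I
proof (induction I rule: finite_induct)
  case empty then show ?case using span_zero[OF E(2)] by simp
next
  case (insert i I)
  have "finsum R F (insert i I) = F i \<oplus> finsum R F I"
    by (rule finsum_insert) (use insert span_carrier[OF E(2)] in auto)
  then show ?case using insert span_add[OF E] by simp
qed

lemma span_mult:
  assumes "finite E" "E \<subseteq> carrier R" "finite E'" "E' \<subseteq> carrier R" "z \<in> carrier R"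
    "y \<in> span R S E" "\<And>e. e \<in> E \<Longrightarrow> z \<otimes> e \<in> span R S E'"
  shows "z \<otimes> y \<in> span R S E'"
proof -
  obtain c where c: "c \<in> E \<rightarrow> S" "y = (\<Oplus>e\<in>E. c e \<otimes> e)"
    using assms(6) unfolding span_def by blast
  have cC: "\<And>e. e \<in> E \<Longrightarrow> c e \<in> carrier R" using c SC by auto
  have "z \<otimes> y = (\<Oplus>e\<in>E. z \<otimes> (c e \<otimes> e))"
    unfolding c(2) by (rule finsum_rdistr) (use assms cC in auto)
  also have "\<dots> = (\<Oplus>e\<in>E. c e \<otimes> (z \<otimes> e))"
    by (rule finsum_cong') (use assms cC in \<open>auto simp: m_lcomm\<close>)
  also have "\<dots> \<in> span R S E'"
  proof (rule span_sum[OF assms(3,4,1)])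
    fix e assume e: "e \<in> E"
    show "c e \<otimes> (z \<otimes> e) \<in> span R S E'"
      by (rule span_smult[OF assms(3,4)]) (use c(1) assms(7) e in auto)
  qed
  finally show ?thesis .
qed

lemma span_sub: "finite E \<Longrightarrow> E \<subseteq> carrier R \<Longrightarrow> finite E' \<Longrightarrow> E' \<subseteq> carrier R \<Longrightarrow>
  E \<subseteq> span R S E' \<Longrightarrow> span R S E \<subseteq> span R S E'"
proof
  fix y assume E: "finite E" "E \<subseteq> carrier R" "finite E'" "E' \<subseteq> carrier R" "E \<subseteq> span R S E'" "y \<in> span R S E"
  have "\<one> \<otimes> y \<in> span R S E'"
  proof (rule span_mult[OF E(1-4)])
    fix e assume e: "e \<in> E"
    then have "e \<in> carrier R" "e \<in> span R S E'" using E by auto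
    then show "\<one> \<otimes> e \<in> span R S E'" by simp
  qed (use E in auto)
  then show "y \<in> span R S E'" using span_carrier[OF E(2) E(6)] by simp
qed

lemma gen_self: "generate_ring R S = S"
proof
  show "generate_ring R S \<subseteq> S" by (rule generate_ring_min_subring1[OF subringE(1)[OF S] S]) simp
  show "S \<subseteq> generate_ring R S" by (rule subsetI, rule generate_ring.incl)
qed

lemma fin_mod:
  assumes "finite B" "B \<subseteq> carrier R" "\<forall>b\<in>B. integral_over R S b"
  shows "\<exists>E. finite E \<and> E \<subseteq> generate_ring R (S \<union> B) \<and> generate_ring R (S \<union> B) \<subseteq> span R S E"
  using assms
proof (induction B rule: finite_induct)
  case empty
  have "S \<subseteq> span R S {\<one>}"
  proof
    fix s assume s: "s \<in> S"
    have i1: "\<one> \<in> span R S {\<one>}" by (rule span_incl) auto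
    have "s \<otimes> \<one> \<in> span R S {\<one>}" by (rule span_smult) (use s i1 in auto)
    then show "s \<in> span R S {\<one>}" using SC[OF s] by simp
  qed
  moreover have "\<one> \<in> S" using subringE(3)[OF S] .
  ultimately show ?case unfolding Un_empty_right gen_self by (intro exI[of _ "{\<one>}"]) simp
next
  case (insert b B)
  define T where "T = generate_ring R (S \<union> B)"
  define T' where "T' = generate_ring R (S \<union> insert b B)"
  have SBC: "S \<union> B \<subseteq> carrier R" "S \<union> insert b B \<subseteq> carrier R"
    using insert.prems(1) subringE(1)[OF S] by blast+
  have Bp: "B \<subseteq> carrier R" using insert.prems(1) by blast
  have Bi: "\<forall>b\<in>B. integral_over R S b" using insert.prems(2) by blast
  have "\<exists>E. finite E \<and> E \<subseteq> T \<and> T \<subseteq> span R S E"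
    unfolding T_def by (rule insert.IH[OF Bp Bi])
  then obtain E where E: "finite E" "E \<subseteq> T" "T \<subseteq> span R S E" by blast
  have Tsub: "subring T R" unfolding T_def by (rule generate_ring_is_subring[OF SBC(1)])
  have T'sub: "subring T' R" unfolding T'_def by (rule generate_ring_is_subring[OF SBC(2)])
  have TT': "T \<subseteq> T'" unfolding T_def T'_def by (rule mono_generate_ring) (use SBC in auto)
  have ST: "S \<subseteq> T" unfolding T_def by (rule subsetI, rule generate_ring.incl) simp
  have BT: "B \<subseteq> T" unfolding T_def by (rule subsetI, rule generate_ring.incl) simp
  have bC: "b \<in> carrier R" using insert.prems(1) by blast
  have bT': "b \<in> T'" unfolding T'_def by (rule generate_ring.incl) simp
  have EC: "E \<subseteq> carrier R" using E(2) subringE(1)[OF Tsub] by blast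
  have ib: "integral_over R S b" using insert.prems(2) by blast
  obtain d :: nat and c where dc: "d \<ge> 1" "\<forall>i<d. c i \<in> S" "b [^] d \<oplus> (\<Oplus>i\<in>{..<d}. c i \<otimes> b [^] i) = \<zero>"
    using ib unfolding integral_over_def by blast
  interpret hc: hctx R T b unfolding hctx_def hctx_axioms_def using is_cring Tsub bC by blast
  have ps: "(\<Oplus>i\<in>{..<d}. c i \<otimes> b [^] i) \<in> hc.L d"
    by (rule hc.L_polysum) (use dc ST in auto)
  have "b [^] d = \<ominus> (\<Oplus>i\<in>{..<d}. c i \<otimes> b [^] i)"
    using dc(3) ps hc.L_carrier bC by (intro minus_equality[symmetric]) auto
  then have xd: "b [^] d \<in> hc.L d" using hc.L_neg[OF ps] by simp
  have T'L: "T' \<subseteq> hc.L d"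
    unfolding T'_def
  proof (rule generate_ring_min_subring1[OF SBC(2) hc.L_subring[OF dc(1) xd]])
    show "S \<union> insert b B \<subseteq> hc.L d"
      using hc.A_L[OF dc(1) xd] ST BT hc.L_x[OF dc(1) xd] by blast
  qed
  define E' where "E' (n::nat) = (\<lambda>p. fst p \<otimes> b [^] snd p) ` (E \<times> {..<n})" for n
  have E'fin: "finite (E' n)" for n unfolding E'_def using E(1) by auto
  have E'C: "E' n \<subseteq> carrier R" for n unfolding E'_def using EC bC by auto
  have claim: "hc.L n \<subseteq> span R S (E' n)" for n
  proof (induction n)
    case 0 then show ?case using span_zero[OF E'C] by simp
  next
    case (Suc n)
    show ?case
    proof
      fix y assume "y \<in> hc.L (Suc n)"
      then obtain a y' where h: "a \<in> T" "y' \<in> hc.L n" "y = a \<oplus> b \<otimes> y'"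
        using hc.L_SucE[of y n] by blast
      have "E \<subseteq> span R S (E' (Suc n))"
      proof
        fix e assume e: "e \<in> E"
        have "e \<otimes> b [^] (0::nat) \<in> E' (Suc n)" unfolding E'_def
          by (rule image_eqI[where x="(e, 0)"]) (use e in auto)
        then show "e \<in> span R S (E' (Suc n))" using span_incl[OF E'fin E'C] e EC by auto
      qed
      then have a: "a \<in> span R S (E' (Suc n))"
        using span_sub[OF E(1) EC E'fin E'C] E(3) h(1) by blast
      have "b \<otimes> y' \<in> span R S (E' (Suc n))"
      proof (rule span_mult[OF E'fin E'C E'fin E'C bC])
        show "y' \<in> span R S (E' n)" using Suc.IH h(2) by blast
        fix e' assume "e' \<in> E' n"
        then obtain e and i :: nat where ei: "e \<in> E" "i < n" "e' = e \<otimes> b [^] i" unfolding E'_def by auto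
        have eC: "e \<in> carrier R" using ei(1) EC by blast
        have "b \<otimes> e' = e \<otimes> b [^] Suc i" using eC ei(3) bC by (simp add: m_lcomm m_comm)
        moreover have "e \<otimes> b [^] Suc i \<in> E' (Suc n)" unfolding E'_def
          by (rule image_eqI[where x="(e, Suc i)"]) (use ei in auto)
        ultimately show "b \<otimes> e' \<in> span R S (E' (Suc n))" using span_incl[OF E'fin E'C] by simp
      qed
      then show "y \<in> span R S (E' (Suc n))" using span_add[OF E'fin E'C a] h(3) by simp
    qed
  qed
  have "E' d \<subseteq> T'"
  proof
    fix e' assume "e' \<in> E' d"
    then obtain e and i :: nat where ei: "e \<in> E" "e' = e \<otimes> b [^] i" unfolding E'_def by auto
    have "e \<in> T'" using ei E(2) TT' by blast
    moreover have "b [^] i \<in> T'" using subring_pow_closed[OF T'sub bT'] .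
    ultimately show "e' \<in> T'" using ei subringE(6)[OF T'sub] by simp
  qed
  then show ?case using E'fin[of d] T'L claim[of d] unfolding T'_def by blast
qed

end



definition cst :: "('a, 'b) ring_scheme \<Rightarrow> 'a \<Rightarrow> ('n::finite \<Rightarrow> nat) \<Rightarrow> 'a" where
  "cst R c = (\<lambda>m. if m = (\<lambda>i. 0) then c else \<zero>\<^bsub>R\<^esub>)"

context cring
begin

lemma ps_cst_mult0:
  fixes m :: "'n::finite \<Rightarrow> nat"
  assumes "f \<in> ps_carrier (carrier R)" "c \<in> carrier R"
  shows "(\<Oplus>p\<in>antidiag m. (if fst p = (\<lambda>i. 0) then c else \<zero>) \<otimes> f (snd p)) = c \<otimes> f m"
proof -
  have "(\<Oplus>p\<in>antidiag m. (if fst p = (\<lambda>i. 0) then c else \<zero>) \<otimes> f (snd p))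
      = (\<Oplus>p\<in>antidiag m. (if ((\<lambda>i. 0), m) = p then c \<otimes> f (snd p) else \<zero>))"
    by (rule finsum_cong') (use assms in \<open>auto simp: ps_carrier_iff antidiag_def\<close>)
  also have "\<dots> = c \<otimes> f (snd ((\<lambda>i. 0), m))"
    using finsum_singleton[where i="((\<lambda>i. 0::nat), m)" and f="\<lambda>p. c \<otimes> f (snd p)" and A="antidiag m"]
      assms finite_antidiag by (auto simp: ps_carrier_iff antidiag_def)
  finally show ?thesis by simp
qed

lemma cst_carrier: "c \<in> S \<Longrightarrow> \<zero> \<in> S \<Longrightarrow> (cst R c :: ('n::finite \<Rightarrow> nat) \<Rightarrow> 'a) \<in> ps_carrier S"
  by (auto simp: cst_def ps_carrier_iff)

lemma ps_mult_cst:
  assumes h: "h \<in> carrier (ps_ring R :: (('n::finite \<Rightarrow> nat) \<Rightarrow> 'a) ring)" and c: "c \<in> carrier R"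
  shows "h \<otimes>\<^bsub>ps_ring R\<^esub> cst R c = (\<lambda>m. h m \<otimes> c)"
proof -
  interpret P: cring "ps_ring R :: (('n::finite \<Rightarrow> nat) \<Rightarrow> 'a) ring" by (rule ps_cring)
  have cc: "(cst R c :: ('n::finite \<Rightarrow> nat) \<Rightarrow> 'a) \<in> carrier (ps_ring R)"
    using cst_carrier[of c "carrier R"] c by (simp add: ps_simps)
  have "h \<otimes>\<^bsub>ps_ring R\<^esub> cst R c = cst R c \<otimes>\<^bsub>ps_ring R\<^esub> h" using P.m_comm[OF h cc] .
  also have "\<dots> = (\<lambda>m. c \<otimes> h m)"
    unfolding ps_simps cst_def
    by (rule ext, rule ps_cst_mult0) (use h c in \<open>auto simp: ps_simps\<close>)
  also have "\<dots> = (\<lambda>m. h m \<otimes> c)" using h c by (auto simp: ps_simps ps_carrier_iff m_comm)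
  finally show ?thesis .
qed

lemma ps_finsum:
  assumes "finite I" "F \<in> I \<rightarrow> carrier (ps_ring R :: (('n::finite \<Rightarrow> nat) \<Rightarrow> 'a) ring)"
  shows "finsum (ps_ring R) F I = (\<lambda>m. \<Oplus>i\<in>I. F i m)"
  using assms
proof (induction I rule: finite_induct)
  case empty
  interpret P: cring "ps_ring R :: (('n::finite \<Rightarrow> nat) \<Rightarrow> 'a) ring" by (rule ps_cring)
  show ?case by (simp add: ps_simps)
next
  case (insert j I)
  interpret P: cring "ps_ring R :: (('n::finite \<Rightarrow> nat) \<Rightarrow> 'a) ring" by (rule ps_cring)
  have FC: "\<And>i m. i \<in> insert j I \<Longrightarrow> F i m \<in> carrier R"
  proof -
    fix i m assume i: "i \<in> insert j I"
    have "F i \<in> carrier (ps_ring R :: (('n::finite \<Rightarrow> nat) \<Rightarrow> 'a) ring)"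
      using funcset_mem[OF insert.prems i] .
    then show "F i m \<in> carrier R" by (simp add: ps_simps ps_carrier_iff)
  qed
  have "finsum (ps_ring R) F (insert j I) = F j \<oplus>\<^bsub>ps_ring R\<^esub> finsum (ps_ring R) F I"
    by (rule P.finsum_insert) (use insert in auto)
  also have "\<dots> = (\<lambda>m. F j m \<oplus> (\<Oplus>i\<in>I. F i m))"
    using insert by (simp add: ps_simps)
  also have "\<dots> = (\<lambda>m. \<Oplus>i\<in>insert j I. F i m)"
  proof
    fix m
    show "F j m \<oplus> (\<Oplus>i\<in>I. F i m) = (\<Oplus>i\<in>insert j I. F i m)"
      by (rule finsum_insert[symmetric]) (use insert FC in auto)
  qed
  finally show ?case .
qed

lemma ps_subring:
  assumes S: "subring S R"
  shows "subring (ps_carrier S) (ps_ring R :: (('n::finite \<Rightarrow> nat) \<Rightarrow> 'a) ring)"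
proof -
  interpret P: cring "ps_ring R :: (('n::finite \<Rightarrow> nat) \<Rightarrow> 'a) ring" by (rule ps_cring)
  have SC: "S \<subseteq> carrier R" using subringE(1)[OF S] .
  show ?thesis
  proof (rule P.subringI)
    show "ps_carrier S \<subseteq> carrier (ps_ring R :: (('n::finite \<Rightarrow> nat) \<Rightarrow> 'a) ring)"
      unfolding ps_simps ps_carrier_def using SC by blast
    show "\<one>\<^bsub>ps_ring R\<^esub> \<in> ps_carrier S"
      using subringE(2,3)[OF S] by (auto simp: ps_simps ps_carrier_iff)
  next
    fix h :: "('n \<Rightarrow> nat) \<Rightarrow> 'a" assume h: "h \<in> ps_carrier S"
    have hC: "h \<in> carrier (ps_ring R :: (('n::finite \<Rightarrow> nat) \<Rightarrow> 'a) ring)"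
      using h SC by (auto simp: ps_simps ps_carrier_iff)
    have nC: "(\<lambda>m. \<ominus> h m) \<in> carrier (ps_ring R :: (('n::finite \<Rightarrow> nat) \<Rightarrow> 'a) ring)"
      using hC by (auto simp: ps_simps ps_carrier_iff)
    have "(\<lambda>m. \<ominus> h m) \<oplus>\<^bsub>ps_ring R\<^esub> h = \<zero>\<^bsub>ps_ring R\<^esub>"
      using hC by (auto simp: ps_simps ps_carrier_iff l_neg)
    then have "\<ominus>\<^bsub>ps_ring R\<^esub> h = (\<lambda>m. \<ominus> h m)" using P.minus_equality[OF _ hC nC] by simp
    then show "\<ominus>\<^bsub>ps_ring R\<^esub> h \<in> ps_carrier S"
      using h subringE(5)[OF S] by (auto simp: ps_carrier_iff)
  next
    fix h1 h2 :: "('n \<Rightarrow> nat) \<Rightarrow> 'a" assume h: "h1 \<in> ps_carrier S" "h2 \<in> ps_carrier S"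
    show "h1 \<otimes>\<^bsub>ps_ring R\<^esub> h2 \<in> ps_carrier S"
      unfolding ps_simps ps_carrier_iff
    proof
      fix m
      show "(\<Oplus>p\<in>antidiag m. h1 (fst p) \<otimes> h2 (snd p)) \<in> S"
        by (rule finsum_subring[OF S finite_antidiag]) (use h subringE(6)[OF S] in \<open>auto simp: ps_carrier_iff\<close>)
    qed
    show "h1 \<oplus>\<^bsub>ps_ring R\<^esub> h2 \<in> ps_carrier S"
      using h subringE(7)[OF S] by (auto simp: ps_simps ps_carrier_iff)
  qed
qed

end

lemma (in cring) main_lemma:
  fixes R0 Ra :: "'a set"
    and f :: "('n::finite \<Rightarrow> nat) \<Rightarrow> 'a"
  assumes "subring R0 R"
    and "\<forall>x\<in>carrier R. integral_over R R0 x"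
    and "Ra \<in> fg_family R R0"
    and "f \<in> artinian_ps R R0"
  shows "integral_over (ps_ring R) (ps_carrier Ra) f"
proof -
  interpret P: cring "ps_ring R :: (('n \<Rightarrow> nat) \<Rightarrow> 'a) ring" by (rule ps_cring)
  have R0C: "R0 \<subseteq> carrier R" using subringE(1)[OF assms(1)] .
  obtain A1 where A1: "finite A1" "A1 \<subseteq> carrier R" "Ra = generate_ring R (R0 \<union> A1)"
    using assms(3) unfolding fg_family_def by blast
  obtain A2 where A2: "finite A2" "A2 \<subseteq> carrier R" "f \<in> ps_carrier (generate_ring R (R0 \<union> A2))"
    using assms(4) unfolding artinian_ps_def fg_family_def by blast
  have Rasub: "subring Ra R" unfolding A1(3) by (rule generate_ring_is_subring) (use R0C A1 in auto)
  have RaC: "Ra \<subseteq> carrier R" using subringE(1)[OF Rasub] .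
  have R0Ra: "R0 \<subseteq> Ra" unfolding A1(3) by (rule subsetI, rule generate_ring.incl) simp
  interpret sp: spctx R Ra unfolding spctx_def spctx_axioms_def using is_cring Rasub by blast
  have intA2: "\<forall>b\<in>A2. integral_over R Ra b"
  proof
    fix b assume "b \<in> A2"
    then have "integral_over R R0 b" using assms(2) A2(2) by blast
    then show "integral_over R Ra b" unfolding integral_over_def using R0Ra by blast
  qed
  obtain E where E: "finite E" "E \<subseteq> generate_ring R (Ra \<union> A2)" "generate_ring R (Ra \<union> A2) \<subseteq> span R Ra E"
    using sp.fin_mod[OF A2(1,2) intA2] by blast
  define Rg where "Rg = generate_ring R (Ra \<union> A2)"
  have RgC: "Ra \<union> A2 \<subseteq> carrier R" using RaC A2(2) by blast
  have Rgsub: "subring Rg R" unfolding Rg_def by (rule generate_ring_is_subring[OF RgC])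
  have fRg: "f m \<in> Rg" for m
  proof -
    have "generate_ring R (R0 \<union> A2) \<subseteq> Rg"
      unfolding Rg_def by (rule mono_generate_ring) (use R0Ra RgC in auto)
    then show ?thesis using A2(3) by (auto simp: ps_carrier_iff)
  qed
  have ERg: "E \<subseteq> Rg" using E(2) unfolding Rg_def .
  have RgSpan: "Rg \<subseteq> span R Ra E" using E(3) unfolding Rg_def .
  have EC: "E \<subseteq> carrier R" using ERg subringE(1)[OF Rgsub] by blast
  have fC: "f \<in> carrier (ps_ring R :: (('n \<Rightarrow> nat) \<Rightarrow> 'a) ring)"
    using fRg subringE(1)[OF Rgsub] by (auto simp: ps_simps ps_carrier_iff)
  have PRa: "subring (ps_carrier Ra) (ps_ring R :: (('n \<Rightarrow> nat) \<Rightarrow> 'a) ring)"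
    by (rule ps_subring[OF Rasub])
  interpret hc: hctx "ps_ring R :: (('n \<Rightarrow> nat) \<Rightarrow> 'a) ring" "ps_carrier Ra" f
    unfolding hctx_def hctx_axioms_def using P.is_cring PRa fC by blast
  let ?g = "\<lambda>e. (cst R e :: ('n \<Rightarrow> nat) \<Rightarrow> 'a)"
  have gC: "?g \<in> E \<rightarrow> carrier (ps_ring R :: (('n \<Rightarrow> nat) \<Rightarrow> 'a) ring)"
    using EC cst_carrier[of _ "carrier R"] by (auto simp: ps_simps)
  have PRaC: "\<And>h. h \<in> ps_carrier Ra \<Longrightarrow> h \<in> carrier (ps_ring R :: (('n \<Rightarrow> nat) \<Rightarrow> 'a) ring)"
    using RaC by (auto simp: ps_simps ps_carrier_iff)
  have rel: "\<exists>a. a \<in> E \<rightarrow> ps_carrier Ra \<and>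
      f \<otimes>\<^bsub>ps_ring R\<^esub> ?g e = (\<Oplus>\<^bsub>ps_ring R\<^esub>j\<in>E. a j \<otimes>\<^bsub>ps_ring R\<^esub> ?g j)" if e: "e \<in> E" for e
  proof -
    have eC: "e \<in> carrier R" using e EC by blast
    have "\<forall>m. \<exists>c. c \<in> E \<rightarrow> Ra \<and> f m \<otimes> e = (\<Oplus>j\<in>E. c j \<otimes> j)"
    proof
      fix m
      have "f m \<otimes> e \<in> Rg" using subringE(6)[OF Rgsub fRg] e ERg by blast
      then show "\<exists>c. c \<in> E \<rightarrow> Ra \<and> f m \<otimes> e = (\<Oplus>j\<in>E. c j \<otimes> j)"
        using RgSpan unfolding span_def by blast
    qed
    then obtain C where C: "\<And>m. C m \<in> E \<rightarrow> Ra \<and> f m \<otimes> e = (\<Oplus>j\<in>E. C m j \<otimes> j)"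
      by metis
    define a where "a j = (\<lambda>m. C m j)" for j
    have aRa: "a \<in> E \<rightarrow> ps_carrier Ra"
    proof (rule Pi_I)
      fix j assume j: "j \<in> E"
      show "a j \<in> ps_carrier Ra"
        unfolding a_def ps_carrier_iff by (intro allI funcset_mem[OF C[THEN conjunct1] j])
    qed
    have aC: "\<And>j m. j \<in> E \<Longrightarrow> a j m \<in> carrier R"
    proof -
      fix j m assume j: "j \<in> E"
      have "a j m \<in> Ra" using funcset_mem[OF aRa j] by (simp add: ps_carrier_iff)
      then show "a j m \<in> carrier R" using RaC by blast
    qed
    have jC: "\<And>j. j \<in> E \<Longrightarrow> j \<in> carrier R" using EC by blast
    have amC: "(\<lambda>j. (\<lambda>m. a j m \<otimes> j)) \<in> E \<rightarrow> carrier (ps_ring R :: (('n \<Rightarrow> nat) \<Rightarrow> 'a) ring)"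
    proof (rule Pi_I)
      fix j assume j: "j \<in> E"
      show "(\<lambda>m. a j m \<otimes> j) \<in> carrier (ps_ring R :: (('n \<Rightarrow> nat) \<Rightarrow> 'a) ring)"
        unfolding ps_simps ps_carrier_iff using aC[OF j] jC[OF j] by simp
    qed
    have "(\<Oplus>\<^bsub>ps_ring R\<^esub>j\<in>E. a j \<otimes>\<^bsub>ps_ring R\<^esub> ?g j) = (\<Oplus>\<^bsub>ps_ring R\<^esub>j\<in>E. (\<lambda>m. a j m \<otimes> j))"
    proof (rule P.finsum_cong')
      show "(\<lambda>j. (\<lambda>m. a j m \<otimes> j)) \<in> E \<rightarrow> carrier (ps_ring R :: (('n \<Rightarrow> nat) \<Rightarrow> 'a) ring)"
        using amC .
      fix j assume j: "j \<in> E"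
      show "a j \<otimes>\<^bsub>ps_ring R\<^esub> ?g j = (\<lambda>m. a j m \<otimes> j)"
        by (rule ps_mult_cst[OF PRaC[OF funcset_mem[OF aRa j]] jC[OF j]])
    qed simp
    also have "\<dots> = (\<lambda>m. \<Oplus>j\<in>E. a j m \<otimes> j)"
      by (rule ps_finsum[OF E(1) amC])
    also have "\<dots> = (\<lambda>m. f m \<otimes> e)"
    proof (rule ext)
      fix m
      show "(\<Oplus>j\<in>E. a j m \<otimes> j) = f m \<otimes> e"
        unfolding a_def by (rule sym, rule conjunct2[OF C[of m]])
    qed
    also have "\<dots> = f \<otimes>\<^bsub>ps_ring R\<^esub> ?g e" by (rule ps_mult_cst[symmetric, OF fC eC])
    finally have eqa: "(\<Oplus>\<^bsub>ps_ring R\<^esub>j\<in>E. a j \<otimes>\<^bsub>ps_ring R\<^esub> ?g j) = f \<otimes>\<^bsub>ps_ring R\<^esub> ?g e" .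
    show ?thesis by (rule exI[of _ a], rule conjI[OF aRa eqa[symmetric]])
  qed
  have "\<one> \<in> span R Ra E" using RgSpan subringE(3)[OF Rgsub] by blast
  then obtain c1 where c1: "c1 \<in> E \<rightarrow> Ra" "\<one> = (\<Oplus>j\<in>E. c1 j \<otimes> j)" unfolding span_def by blast
  let ?u = "\<lambda>e. (cst R (c1 e) :: ('n \<Rightarrow> nat) \<Rightarrow> 'a)"
  have uC: "?u \<in> E \<rightarrow> carrier (ps_ring R :: (('n \<Rightarrow> nat) \<Rightarrow> 'a) ring)"
  proof (rule Pi_I)
    fix j assume j: "j \<in> E"
    have "c1 j \<in> carrier R" using funcset_mem[OF c1(1) j] RaC by blast
    then show "?u j \<in> carrier (ps_ring R :: (('n \<Rightarrow> nat) \<Rightarrow> 'a) ring)"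
      using cst_carrier[of "c1 j" "carrier R"] by (simp add: ps_simps)
  qed
  have one: "\<one>\<^bsub>ps_ring R\<^esub> = (\<Oplus>\<^bsub>ps_ring R\<^esub>j\<in>E. ?u j \<otimes>\<^bsub>ps_ring R\<^esub> ?g j)"
  proof -
    have uC': "\<And>j m. j \<in> E \<Longrightarrow> ?u j m \<in> carrier R"
    proof -
      fix j m assume j: "j \<in> E"
      show "?u j m \<in> carrier R" using funcset_mem[OF uC j] by (simp add: ps_simps ps_carrier_iff)
    qed
    have jC: "\<And>j. j \<in> E \<Longrightarrow> j \<in> carrier R" using EC by blast
    have umC: "(\<lambda>j. (\<lambda>m. ?u j m \<otimes> j)) \<in> E \<rightarrow> carrier (ps_ring R :: (('n \<Rightarrow> nat) \<Rightarrow> 'a) ring)"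
    proof (rule Pi_I)
      fix j assume j: "j \<in> E"
      show "(\<lambda>m. ?u j m \<otimes> j) \<in> carrier (ps_ring R :: (('n \<Rightarrow> nat) \<Rightarrow> 'a) ring)"
        unfolding ps_simps ps_carrier_iff using uC'[OF j] jC[OF j] by simp
    qed
    have "(\<Oplus>\<^bsub>ps_ring R\<^esub>j\<in>E. ?u j \<otimes>\<^bsub>ps_ring R\<^esub> ?g j) = (\<Oplus>\<^bsub>ps_ring R\<^esub>j\<in>E. (\<lambda>m. ?u j m \<otimes> j))"
    proof (rule P.finsum_cong')
      show "(\<lambda>j. (\<lambda>m. ?u j m \<otimes> j)) \<in> E \<rightarrow> carrier (ps_ring R :: (('n \<Rightarrow> nat) \<Rightarrow> 'a) ring)"
        using umC .
      fix j assume j: "j \<in> E"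
      show "?u j \<otimes>\<^bsub>ps_ring R\<^esub> ?g j = (\<lambda>m. ?u j m \<otimes> j)"
        by (rule ps_mult_cst[OF funcset_mem[OF uC j] jC[OF j]])
    qed simp
    also have "\<dots> = (\<lambda>m. \<Oplus>j\<in>E. ?u j m \<otimes> j)"
      by (rule ps_finsum[OF E(1) umC])
    also have "\<dots> = \<one>\<^bsub>ps_ring R\<^esub>"
    proof
      fix m :: "'n \<Rightarrow> nat"
      show "(\<Oplus>j\<in>E. ?u j m \<otimes> j) = \<one>\<^bsub>ps_ring R\<^esub> m"
      proof (cases "m = (\<lambda>i. 0)")
        case True
        have "(\<Oplus>j\<in>E. ?u j m \<otimes> j) = (\<Oplus>j\<in>E. c1 j \<otimes> j)"
          by (rule finsum_cong') (use True EC c1(1) RaC in \<open>auto simp: cst_def\<close>)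
        then show ?thesis using True c1(2) by (simp add: ps_simps)
      next
        case False
        have "(\<Oplus>j\<in>E. ?u j m \<otimes> j) = (\<Oplus>j\<in>E. \<zero>)"
          by (rule finsum_cong') (use False EC in \<open>auto simp: cst_def\<close>)
        then show ?thesis using False by (simp add: ps_simps)
      qed
    qed
    finally show ?thesis by simp
  qed
  show ?thesis by (rule hc.det_trick[OF E(1) gC rel uC one])
qed

theorem proposition6p4:
  fixes R :: "('a, 'b) ring_scheme" and R0 Ra :: "'a set"
    and f :: "('n::finite \<Rightarrow> nat) \<Rightarrow> 'a"
  assumes "cring R"
    and "krull_dim_zero R"
    and "subring R0 R"
    and "artinian_ring (R\<lparr>carrier := R0\<rparr>)"
    and "\<forall>x\<in>carrier R. integral_over R R0 x"
    and "Ra \<in> fg_family R R0"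
    and "f \<in> artinian_ps R R0"
  shows "integral_over (ps_ring R) (ps_carrier Ra) f"
  using cring.main_lemma[OF assms(1) assms(3) assms(5) assms(6) assms(7)] .


end
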